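(* Let $\alpha\ge4$ and let $N'$, $M_l$, $C_j$ be as produced by the clustering procedure, and $Z_l=\sum_{j\in M_l}y_j$. If $i\in N'$ satisfies $Z_i<1$, then $N'\setminus\{i\}\neq\emptyset$ and there exists $l\in N'\setminus\{i\}$ with $c_{il}\le \frac{2C_i}{1-Z_i}$.
   Context: Setting: finite set $N$ of locations, capacity $M>0$, demands $d_j\ge0$, integer $k\ge1$, metric costs $c_{ij}$ on $N$ (nonnegative, $c_{ii}=0$, symmetric, triangle inequality). $(x,y)$ is an optimal solution of the LP-relaxation: minimize $\sum_{i,j}d_jc_{ij}x_{ij}$ s.t. $\sum_{i}x_{ij}=1$ ($j\in N$), $\sum_j d_jx_{ij}\le My_i$ ($i\in N$), $\sum_i y_i\le k$, $0\le x_{ij}\le y_i$, $0\le y_i\le1$. For $j\in N$ let $C_j=\sum_{i\in N}c_{ij}x_{ij}$. Clustering procedure: order the locations as $1,\dots,n$ so that $C_1\le\dots\le C_n$ (ties arbitrary); start with $N'=\emptyset$; for $j=1,\dots,n$ in turn, if there is no $l\in N'$ with $c_{lj}\le 2\alpha C_j$, add $j$ to $N'$. Then for each $j\in N$ let $N'(j)$ be a closest element of $N'$ to $j$ (ties arbitrary), and set $M_l=\{j\in N: N'(j)=l\}$ for $l\in N'$. *)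

theory Defs
  imports Complex_Main
begin

definition metric_on :: "'a set \<Rightarrow> ('a \<Rightarrow> 'a \<Rightarrow> real) \<Rightarrow> bool" where
  "metric_on N c \<longleftrightarrow>
     (\<forall>i\<in>N. \<forall>j\<in>N. c i j \<ge> 0) \<and> (\<forall>i\<in>N. c i i = 0) \<and>
     (\<forall>i\<in>N. \<forall>j\<in>N. c i j = c j i) \<and>
     (\<forall>i\<in>N. \<forall>j\<in>N. \<forall>l\<in>N. c i l \<le> c i j + c j l)"

text \<open>Feasibility for the LP relaxation (x i j = fraction of j served by i).\<close>
definition lp_feasible ::
  "'a set \<Rightarrow> real \<Rightarrow> ('a \<Rightarrow> real) \<Rightarrow> nat \<Rightarrow> ('a \<Rightarrow> 'a \<Rightarrow> real) \<Rightarrow> ('a \<Rightarrow> real) \<Rightarrow> bool" where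
  "lp_feasible N M d k x y \<longleftrightarrow>
     (\<forall>j\<in>N. (\<Sum>i\<in>N. x i j) = 1) \<and>
     (\<forall>i\<in>N. (\<Sum>j\<in>N. d j * x i j) \<le> M * y i) \<and>
     (\<Sum>i\<in>N. y i) \<le> real k \<and>
     (\<forall>i\<in>N. \<forall>j\<in>N. 0 \<le> x i j \<and> x i j \<le> y i) \<and>
     (\<forall>i\<in>N. 0 \<le> y i \<and> y i \<le> 1)"

definition lp_cost ::
  "'a set \<Rightarrow> ('a \<Rightarrow> real) \<Rightarrow> ('a \<Rightarrow> 'a \<Rightarrow> real) \<Rightarrow> ('a \<Rightarrow> 'a \<Rightarrow> real) \<Rightarrow> real" where
  "lp_cost N d c x = (\<Sum>i\<in>N. \<Sum>j\<in>N. d j * c i j * x i j)"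

definition lp_optimal ::
  "'a set \<Rightarrow> real \<Rightarrow> ('a \<Rightarrow> real) \<Rightarrow> nat \<Rightarrow> ('a \<Rightarrow> 'a \<Rightarrow> real)
    \<Rightarrow> ('a \<Rightarrow> 'a \<Rightarrow> real) \<Rightarrow> ('a \<Rightarrow> real) \<Rightarrow> bool" where
  "lp_optimal N M d k c x y \<longleftrightarrow> lp_feasible N M d k x y \<and>
     (\<forall>x' y'. lp_feasible N M d k x' y' \<longrightarrow> lp_cost N d c x \<le> lp_cost N d c x')"

definition Cval :: "'a set \<Rightarrow> ('a \<Rightarrow> 'a \<Rightarrow> real) \<Rightarrow> ('a \<Rightarrow> 'a \<Rightarrow> real) \<Rightarrow> 'a \<Rightarrow> real" where
  "Cval N c x j = (\<Sum>i\<in>N. c i j * x i j)"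

text \<open>Greedy clustering: scan the list in order; acc is the current N'.\<close>
fun cluster_scan :: "real \<Rightarrow> ('a \<Rightarrow> 'a \<Rightarrow> real) \<Rightarrow> ('a \<Rightarrow> real) \<Rightarrow> 'a list \<Rightarrow> 'a list \<Rightarrow> 'a list" where
  "cluster_scan \<alpha> c C acc [] = acc"
| "cluster_scan \<alpha> c C acc (j # js) =
     cluster_scan \<alpha> c C
       (if (\<exists>l\<in>set acc. c l j \<le> 2 * \<alpha> * C j) then acc else acc @ [j]) js"

definition cluster_centers :: "real \<Rightarrow> ('a \<Rightarrow> 'a \<Rightarrow> real) \<Rightarrow> ('a \<Rightarrow> real) \<Rightarrow> 'a list \<Rightarrow> 'a set" where
  "cluster_centers \<alpha> c C ord = set (cluster_scan \<alpha> c C [] ord)"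

definition valid_order :: "'a set \<Rightarrow> ('a \<Rightarrow> real) \<Rightarrow> 'a list \<Rightarrow> bool" where
  "valid_order N C ord \<longleftrightarrow> distinct ord \<and> set ord = N \<and> sorted_wrt (\<lambda>a b. C a \<le> C b) ord"

definition closest_assignment :: "'a set \<Rightarrow> 'a set \<Rightarrow> ('a \<Rightarrow> 'a \<Rightarrow> real) \<Rightarrow> ('a \<Rightarrow> 'a) \<Rightarrow> bool" where
  "closest_assignment N N' c nearest \<longleftrightarrow>
     (\<forall>j\<in>N. nearest j \<in> N' \<and> (\<forall>l\<in>N'. c j (nearest j) \<le> c j l))"

definition cluster_members :: "'a set \<Rightarrow> ('a \<Rightarrow> 'a) \<Rightarrow> 'a \<Rightarrow> 'a set" where
  "cluster_members N nearest l = {j\<in>N. nearest j = l}"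

end

theory Submission
  imports Defs
begin

lemma scan_subset: "set (cluster_scan a c C acc js) \<subseteq> set acc \<union> set js"
  by (induction js arbitrary: acc) (auto, fastforce+)

theorem mainTheorem5:
  fixes N :: "'a set" and M \<alpha> :: real and d y :: "'a \<Rightarrow> real" and k :: nat
    and c x :: "'a \<Rightarrow> 'a \<Rightarrow> real" and ord :: "'a list" and nearest :: "'a \<Rightarrow> 'a"
    and i :: 'a
  assumes "finite N" and "M > 0" and "\<forall>j\<in>N. d j \<ge> 0" and "k \<ge> 1"
    and "metric_on N c"
    and "lp_optimal N M d k c x y"
    and "\<alpha> \<ge> 4"
    and "valid_order N (Cval N c x) ord"
    and "closest_assignment N (cluster_centers \<alpha> c (Cval N c x) ord) c nearest"
    and "i \<in> cluster_centers \<alpha> c (Cval N c x) ord"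
    and "(\<Sum>j\<in>cluster_members N nearest i. y j) < 1"
  shows "cluster_centers \<alpha> c (Cval N c x) ord - {i} \<noteq> {} \<and>
         (\<exists>l\<in>cluster_centers \<alpha> c (Cval N c x) ord - {i}.
            c i l \<le> 2 * Cval N c x i / (1 - (\<Sum>j\<in>cluster_members N nearest i. y j)))"
proof -
  define N' where "N' = cluster_centers \<alpha> c (Cval N c x) ord"
  define Mi where "Mi = cluster_members N nearest i"
  define Z where "Z = (\<Sum>j\<in>Mi. y j)"
  define S where "S = N - Mi"
  have fin: "finite N" by fact
  have feas: "lp_feasible N M d k x y" using assms(6) unfolding lp_optimal_def by blast
  have xy: "\<forall>a\<in>N. \<forall>b\<in>N. 0 \<le> x a b \<and> x a b \<le> y a" and sum1: "\<forall>j\<in>N. (\<Sum>a\<in>N. x a j) = 1"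
    using feas unfolding lp_feasible_def by auto
  have met: "\<forall>a\<in>N. \<forall>b\<in>N. c a b \<ge> 0" "\<forall>a\<in>N. \<forall>b\<in>N. c a b = c b a"
     "\<forall>a\<in>N. \<forall>b\<in>N. \<forall>e\<in>N. c a e \<le> c a b + c b e"
    using assms(5) unfolding metric_on_def by auto
  have N'N: "N' \<subseteq> N" using scan_subset[of \<alpha> c "Cval N c x" "[]" ord] assms(8)
    unfolding N'_def cluster_centers_def valid_order_def by auto
  have iN: "i \<in> N" using assms(10) N'N N'_def by auto
  have ca: "\<forall>j\<in>N. nearest j \<in> N' \<and> (\<forall>l\<in>N'. c j (nearest j) \<le> c j l)"
    using assms(9) unfolding closest_assignment_def N'_def by auto
  have Z1: "Z < 1" using assms(11) unfolding Z_def Mi_def .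
  have MiN: "Mi \<subseteq> N" unfolding Mi_def cluster_members_def by auto
  have finMi: "finite Mi" using MiN fin finite_subset by blast
  have finS: "finite S" unfolding S_def using fin by auto
  have "(\<Sum>j\<in>Mi. x j i) \<le> Z" unfolding Z_def
    using xy MiN iN by (intro sum_mono) auto
  moreover have "(\<Sum>j\<in>N. x j i) = (\<Sum>j\<in>Mi. x j i) + (\<Sum>j\<in>S. x j i)"
    unfolding S_def using sum.subset_diff[OF MiN fin] by (simp add: add.commute)
  ultimately have sx: "(\<Sum>j\<in>S. x j i) \<ge> 1 - Z" using sum1 iN by auto
  have Sne: "S \<noteq> {}" using sx Z1 by auto
  define m where "m = Min ((\<lambda>j. c i j) ` S)"
  have "m \<in> (\<lambda>j. c i j) ` S" unfolding m_def using finS Sne by (intro Min_in) auto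
  then obtain j0 where j0: "j0 \<in> S" "c i j0 = m" by auto
  have mle: "\<forall>j\<in>S. m \<le> c i j" unfolding m_def using finS by auto
  have j0N: "j0 \<in> N" using j0 S_def by auto
  have m0: "m \<ge> 0" using j0 j0N iN met(1) by auto
  have "Cval N c x i = (\<Sum>j\<in>N. c j i * x j i)" unfolding Cval_def ..
  also have "\<dots> = (\<Sum>j\<in>Mi. c j i * x j i) + (\<Sum>j\<in>S. c j i * x j i)"
    unfolding S_def using sum.subset_diff[OF MiN fin] by (simp add: add.commute)
  also have "\<dots> \<ge> (\<Sum>j\<in>S. c j i * x j i)"
    using MiN met(1) xy iN by (smt (verit) mult_nonneg_nonneg subsetD sum_nonneg)
  finally have C1: "Cval N c x i \<ge> (\<Sum>j\<in>S. c j i * x j i)" .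
  have "(\<Sum>j\<in>S. c j i * x j i) \<ge> (\<Sum>j\<in>S. m * x j i)"
  proof (intro sum_mono)
    fix j assume jS: "j \<in> S"
    then have jN: "j \<in> N" using S_def by auto
    have "m \<le> c j i" using mle jS met(2) jN iN by auto
    then show "m * x j i \<le> c j i * x j i" using xy jN iN by (simp add: mult_right_mono)
  qed
  moreover have "(\<Sum>j\<in>S. m * x j i) = m * (\<Sum>j\<in>S. x j i)" by (simp add: sum_distrib_left)
  moreover have "m * (\<Sum>j\<in>S. x j i) \<ge> m * (1 - Z)" using sx m0 by (simp add: mult_left_mono)
  ultimately have Cm: "Cval N c x i \<ge> m * (1 - Z)" using C1 by linarith
  define l where "l = nearest j0"
  have lN': "l \<in> N'" using ca j0N l_def by auto
  have lN: "l \<in> N" using lN' N'N by auto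
  have li: "l \<noteq> i" using j0 unfolding S_def Mi_def cluster_members_def l_def by auto
  have "c j0 l \<le> c j0 i" using ca j0N assms(10) N'_def l_def by auto
  then have "c i l \<le> 2 * m" using met iN j0N lN j0(2) by smt
  also have "2 * m \<le> 2 * Cval N c x i / (1 - Z)" using Cm Z1 by (simp add: field_simps)
  finally have "c i l \<le> 2 * Cval N c x i / (1 - Z)" .
  then show ?thesis using lN' li unfolding N'_def Z_def Mi_def by blast
qed

end
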